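(* Let $f:\mathbb{R}^n\to\mathbb{R}$ be bounded below and twice continuously differentiable with $\nabla^2f$ Lipschitz with constant $L_{\nabla^2f}$. Let $x\in\mathbb{R}^n$, $\Delta>0$, $p=(n+1)(n+2)/2$, points $y_1,\ldots,y_p$ with $\|y_i-x\|\le\beta\Delta$ for some $\beta>0$ and all $i$, and suppose that the matrix $\hat Q$ with rows $\phi((y_i-x)/\Delta)^T$ is invertible. Let $m$ be the quadratic interpolant of $f$ at $y_1,\ldots,y_p$, let $\ell_1,\ldots,\ell_p$ be the associated quadratic Lagrange polynomials, and suppose $\max_{y\in B(x,\Delta)}\sum_{i=1}^p|\ell_i(y)|\le\Lambda_1$. Then for all $y\in B(x,\Delta)$: $|m(y)-f(y)|\le\kappa_{\mathrm{mf}}\Delta^3$, $\|\nabla m(y)-\nabla f(y)\|\le\kappa_{\mathrm{mg}}\Delta^2$, $\|\nabla^2m(y)-\nabla^2f(y)\|\le\kappa_{\mathrm{mh}}\Delta$, with $$\kappa_{\mathrm{mf}}=\tfrac16L_{\nabla^2f}\beta^3\Lambda_1+\tfrac{L_{\nabla^2f}}{6},\quad\kappa_{\mathrm{mg}}=\tfrac{17}{3}L_{\nabla^2f}\beta^3\Lambda_1+\tfrac{L_{\nabla^2f}}{2},\quad\kappa_{\mathrm{mh}}=4L_{\nabla^2f}\beta^3\Lambda_1+L_{\nabla^2f}.$$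
   Context: $\phi(z)=[1,z_1,\ldots,z_n,\tfrac12z_1^2,z_1z_2,\ldots,z_1z_n,\tfrac12z_2^2,\ldots,z_{n-1}z_n,\tfrac12z_n^2]^T$ is the natural quadratic basis; invertibility of $\hat Q$ means there is a unique quadratic $m(y)=c+g^T(y-x)+\tfrac12(y-x)^TH(y-x)$ ($H$ symmetric) with $m(y_i)=f(y_i)$ for all $i$ (the quadratic interpolant), and unique quadratics $\ell_i$ with $\ell_i(y_j)=\delta_{ij}$ (the Lagrange polynomials). Norms Euclidean/operator 2-norm; $B(x,\Delta)=\{y:\|y-x\|\le\Delta\}$. *)

theory Defs
  imports "HOL-Analysis.Analysis"
begin

text \<open>Index set of the natural quadratic basis phi on R^n:
  QC = constant 1, QL i = z_i, QQ S for S = {i,j} a set of one or two coordinates: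
  S = {i} gives (1/2) z_i^2, S = {i,j} with i \<noteq> j gives z_i z_j.
  (The order of the components is irrelevant for invertibility.)\<close>
datatype 'n qidx = QC | QL 'n | QQ "'n set"

definition qbasis :: "'n qidx set" where
  "qbasis = {QC} \<union> range QL \<union> {QQ {i, j} | i j. True}"

fun phi :: "real^'n \<Rightarrow> 'n qidx \<Rightarrow> real" where
  "phi z QC = 1"
| "phi z (QL i) = z $ i"
| "phi z (QQ S) = (if card S = 1 then (z $ the_elem S)^2 / 2 else (\<Prod>i\<in>S. z $ i))"

definition Qhat :: "real^'n \<Rightarrow> real \<Rightarrow> ('p \<Rightarrow> real^'n) \<Rightarrow> 'p \<Rightarrow> 'n qidx \<Rightarrow> real" where
  "Qhat x \<Delta> y k b = phi ((1 / \<Delta>) *\<^sub>R (y k - x)) b"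

definition qmat_invertible :: "('p::finite \<Rightarrow> 'n::finite qidx \<Rightarrow> real) \<Rightarrow> bool" where
  "qmat_invertible Q \<longleftrightarrow> (\<exists>R :: 'n qidx \<Rightarrow> 'p \<Rightarrow> real.
      (\<forall>b\<in>qbasis. \<forall>b'\<in>qbasis. (\<Sum>k\<in>UNIV. R b k * Q k b') = (if b = b' then 1 else 0)) \<and>
      (\<forall>k k'. (\<Sum>b\<in>qbasis. Q k b * R b k') = (if k = k' then 1 else 0)))"

definition quad :: "real \<Rightarrow> real^'n \<Rightarrow> real^'n^'n \<Rightarrow> real^'n \<Rightarrow> real^'n \<Rightarrow> real" where
  "quad c g H x y = c + g \<bullet> (y - x) + (1/2) * ((y - x) \<bullet> (H *v (y - x)))"

definition opnorm :: "real^'n^'m \<Rightarrow> real" where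
  "opnorm A = onorm (\<lambda>v. A *v v)"

end

theory Submission imports Defs begin

lemma mvt_cmp:
  fixes h h' K k :: "real \<Rightarrow> real"
  assumes ab: "a \<le> b"
    and hd: "\<And>t. a \<le> t \<Longrightarrow> t \<le> b \<Longrightarrow> (h has_real_derivative h' t) (at t)"
    and Kd: "\<And>t. a \<le> t \<Longrightarrow> t \<le> b \<Longrightarrow> (K has_real_derivative k t) (at t)"
    and bd: "\<And>t. a \<le> t \<Longrightarrow> t \<le> b \<Longrightarrow> \<bar>h' t\<bar> \<le> k t"
  shows "\<bar>h b - h a\<bar> \<le> K b - K a"
proof (cases "a = b")
  case True then show ?thesis by simp
next
  case False
  then have lt: "a < b" using ab by simp
  obtain z1 where z1: "a < z1" "z1 < b" "(h b - K b) - (h a - K a) = (b - a) * (h' z1 - k z1)"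
    using MVT2[OF lt, of "\<lambda>t. h t - K t" "\<lambda>t. h' t - k t"] hd Kd
    by (auto intro!: derivative_eq_intros)
  obtain z2 where z2: "a < z2" "z2 < b" "(h b + K b) - (h a + K a) = (b - a) * (h' z2 + k z2)"
    using MVT2[OF lt, of "\<lambda>t. h t + K t" "\<lambda>t. h' t + k t"] hd Kd
    by (auto intro!: derivative_eq_intros)
  have "h' z1 - k z1 \<le> 0" using bd[of z1] z1 by auto
  then have A: "(b - a) * (h' z1 - k z1) \<le> 0" using lt by (simp add: mult_nonneg_nonpos)
  have "h' z2 + k z2 \<ge> 0" using bd[of z2] z2 by auto
  then have B: "(b - a) * (h' z2 + k z2) \<ge> 0" using lt by simp
  show ?thesis using A B z1(3) z2(3) by linarith
qed

context
  fixes f :: "real^'n \<Rightarrow> real"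
    and gradf :: "real^'n \<Rightarrow> real^'n"
    and hessf :: "real^'n \<Rightarrow> real^'n^'n"
  assumes grad: "\<And>z. (f has_derivative (\<lambda>h. gradf z \<bullet> h)) (at z)"
    and hess: "\<And>z. (gradf has_derivative (\<lambda>h. hessf z *v h)) (at z)"
begin

lemma line_f: "((\<lambda>t. f (p + t *\<^sub>R d)) has_real_derivative (gradf (p + t *\<^sub>R d) \<bullet> d)) (at t)"
proof -
  have l: "((\<lambda>t. p + t *\<^sub>R d) has_derivative (\<lambda>s. s *\<^sub>R d)) (at t)"
    by (auto intro!: derivative_eq_intros)
  have "((f \<circ> (\<lambda>t. p + t *\<^sub>R d)) has_derivative ((\<lambda>h. gradf (p + t *\<^sub>R d) \<bullet> h) \<circ> (\<lambda>s. s *\<^sub>R d))) (at t)"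
    by (rule diff_chain_at[OF l grad])
  then show ?thesis unfolding has_field_derivative_def o_def
    by (rule has_derivative_eq_rhs) (auto simp: o_def fun_eq_iff)
qed

lemma line_g: "((\<lambda>t. e \<bullet> gradf (p + t *\<^sub>R d)) has_real_derivative (e \<bullet> (hessf (p + t *\<^sub>R d) *v d))) (at t)"
proof -
  have l: "((\<lambda>t. p + t *\<^sub>R d) has_derivative (\<lambda>s. s *\<^sub>R d)) (at t)"
    by (auto intro!: derivative_eq_intros)
  have "((gradf \<circ> (\<lambda>t. p + t *\<^sub>R d)) has_derivative ((\<lambda>h. hessf (p + t *\<^sub>R d) *v h) \<circ> (\<lambda>s. s *\<^sub>R d))) (at t)"
    by (rule diff_chain_at[OF l hess])
  then have "((\<lambda>t. e \<bullet> (gradf \<circ> (\<lambda>t. p + t *\<^sub>R d)) t) has_derivative (\<lambda>s. e \<bullet> ((\<lambda>h. hessf (p + t *\<^sub>R d) *v h) \<circ> (\<lambda>s. s *\<^sub>R d)) s)) (at t)"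
    by (rule bounded_linear.has_derivative[OF bounded_linear_inner_right])
  then show ?thesis unfolding has_field_derivative_def o_def
    by (rule has_derivative_eq_rhs) (auto simp: o_def fun_eq_iff matrix_vector_mult_scaleR)
qed

lemma Lf: "((\<lambda>t. f (p + t *\<^sub>R d) - t * a - t^2/2 * b) has_real_derivative
   (gradf (p + t *\<^sub>R d) \<bullet> d - a - t * b)) (at t)"
  by (auto intro!: derivative_eq_intros line_f)

lemma Lg: "((\<lambda>t. e \<bullet> gradf (p + t *\<^sub>R d) - t * a) has_real_derivative
   (e \<bullet> (hessf (p + t *\<^sub>R d) *v d) - a)) (at t)"
  by (auto intro!: derivative_eq_intros line_g)
end

lemma opn: "norm (A *v v) \<le> opnorm A * norm v"
  unfolding opnorm_def by (rule onorm[OF matrix_vector_mul_bounded_linear])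

lemma opnorm_le: "(\<And>v. norm (A *v v) \<le> b * norm v) \<Longrightarrow> opnorm A \<le> b"
  unfolding opnorm_def by (rule onorm_le)

context
  fixes f :: "real^'n \<Rightarrow> real"
    and gradf :: "real^'n \<Rightarrow> real^'n"
    and hessf :: "real^'n \<Rightarrow> real^'n^'n"
    and L :: real
  assumes grad: "\<And>z. (f has_derivative (\<lambda>h. gradf z \<bullet> h)) (at z)"
    and hess: "\<And>z. (gradf has_derivative (\<lambda>h. hessf z *v h)) (at z)"
    and hess_lip: "\<And>u v. opnorm (hessf u - hessf v) \<le> L * norm (u - v)"
begin

lemma L_nonneg: "L \<ge> 0"
proof -
  obtain i :: 'n where True by simp
  have "0 \<le> opnorm (hessf 0 - hessf (axis i 1))"
    unfolding opnorm_def by (rule onorm_pos_le[OF matrix_vector_mul_bounded_linear])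
  also have "\<dots> \<le> L * norm (0 - axis i (1::real))" by (rule hess_lip)
  finally show ?thesis by (simp add: zero_le_mult_iff)
qed

lemma T1: "norm (gradf (p + d) - gradf p - hessf p *v d) \<le> L / 2 * norm d ^ 2"
proof -
  define e where "e = gradf (p + d) - gradf p - hessf p *v d"
  define a where "a = e \<bullet> (hessf p *v d)"
  have hd: "((\<lambda>t. e \<bullet> gradf (p + t *\<^sub>R d) - t * a) has_real_derivative
     (e \<bullet> (hessf (p + t *\<^sub>R d) *v d) - a)) (at t)" for t
    by (rule Lg[OF grad hess])
  have Kd: "((\<lambda>t. norm e * L * norm d ^ 2 * t^2 / 2) has_real_derivative
     (norm e * L * norm d ^ 2 * t)) (at t)" for t
    by (auto intro!: derivative_eq_intros)
  have bd: "\<bar>e \<bullet> (hessf (p + t *\<^sub>R d) *v d) - a\<bar> \<le> norm e * L * norm d ^ 2 * t"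
    if "0 \<le> t" "t \<le> 1" for t
  proof -
    have "e \<bullet> (hessf (p + t *\<^sub>R d) *v d) - a = e \<bullet> ((hessf (p + t *\<^sub>R d) - hessf p) *v d)"
      by (simp add: a_def matrix_vector_mult_diff_rdistrib inner_diff_right)
    also have "\<bar>\<dots>\<bar> \<le> norm e * norm ((hessf (p + t *\<^sub>R d) - hessf p) *v d)"
      by (rule Cauchy_Schwarz_ineq2)
    also have "\<dots> \<le> norm e * (opnorm (hessf (p + t *\<^sub>R d) - hessf p) * norm d)"
      by (rule mult_left_mono[OF opn]) simp
    also have "\<dots> \<le> norm e * ((L * norm (p + t *\<^sub>R d - p)) * norm d)"
      by (intro mult_left_mono mult_right_mono hess_lip) auto
    also have "\<dots> = norm e * L * norm d ^ 2 * t"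
      using that by (simp add: power2_eq_square)
    finally show ?thesis .
  qed
  have "\<bar>(e \<bullet> gradf (p + 1 *\<^sub>R d) - 1 * a) - (e \<bullet> gradf (p + 0 *\<^sub>R d) - 0 * a)\<bar>
     \<le> norm e * L * norm d ^ 2 * 1^2 / 2 - norm e * L * norm d ^ 2 * 0^2 / 2"
    by (rule mvt_cmp[OF _ hd Kd bd]) auto
  moreover have "(e \<bullet> gradf (p + 1 *\<^sub>R d) - 1 * a) - (e \<bullet> gradf (p + 0 *\<^sub>R d) - 0 * a) = norm e ^ 2"
    by (simp add: a_def power2_norm_eq_inner e_def[symmetric] inner_diff_right[symmetric])
       (simp add: e_def algebra_simps)
  ultimately have "norm e ^ 2 \<le> norm e * (L / 2 * norm d ^ 2)" by simp
  then have "norm e \<le> L / 2 * norm d ^ 2"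
    using L_nonneg by (cases "norm e = 0") (auto simp: power2_eq_square)
  then show ?thesis by (simp add: e_def)
qed

lemma T0: "\<bar>f (p + d) - f p - gradf p \<bullet> d - 1/2 * (d \<bullet> (hessf p *v d))\<bar> \<le> L / 6 * norm d ^ 3"
proof -
  define a where "a = gradf p \<bullet> d"
  define b where "b = d \<bullet> (hessf p *v d)"
  have hd: "((\<lambda>t. f (p + t *\<^sub>R d) - t * a - t^2/2 * b) has_real_derivative
     (gradf (p + t *\<^sub>R d) \<bullet> d - a - t * b)) (at t)" for t
    by (rule Lf[OF grad hess])
  have Kd: "((\<lambda>t. L / 6 * norm d ^ 3 * t ^ 3) has_real_derivative
     (L / 2 * norm d ^ 3 * t^2)) (at t)" for t
    by (auto intro!: derivative_eq_intros simp: power2_eq_square)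
  have bd: "\<bar>gradf (p + t *\<^sub>R d) \<bullet> d - a - t * b\<bar> \<le> L / 2 * norm d ^ 3 * t^2"
    if "0 \<le> t" "t \<le> 1" for t
  proof -
    have "gradf (p + t *\<^sub>R d) \<bullet> d - a - t * b = d \<bullet> (gradf (p + t *\<^sub>R d) - gradf p - hessf p *v (t *\<^sub>R d))"
      by (simp add: a_def b_def matrix_vector_mult_scaleR inner_diff_right inner_commute)
    also have "\<bar>\<dots>\<bar> \<le> norm d * norm (gradf (p + t *\<^sub>R d) - gradf p - hessf p *v (t *\<^sub>R d))"
      by (rule Cauchy_Schwarz_ineq2)
    also have "\<dots> \<le> norm d * (L / 2 * norm (t *\<^sub>R d) ^ 2)"
      by (rule mult_left_mono[OF T1]) simp
    also have "\<dots> = L / 2 * norm d ^ 3 * t^2"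
      using that by (simp add: power2_eq_square power3_eq_cube)
    finally show ?thesis .
  qed
  have "\<bar>(f (p + 1 *\<^sub>R d) - 1 * a - 1^2/2 * b) - (f (p + 0 *\<^sub>R d) - 0 * a - 0^2/2 * b)\<bar>
     \<le> L / 6 * norm d ^ 3 * 1 ^ 3 - L / 6 * norm d ^ 3 * 0 ^ 3"
    by (rule mvt_cmp[OF _ hd Kd bd]) auto
  then show ?thesis by (simp add: a_def b_def algebra_simps)
qed

lemma sym_aux:
  assumes s: "s \<ge> 0"
  shows "\<bar>f (p + s *\<^sub>R v + s *\<^sub>R u) - f (p + s *\<^sub>R u) - f (p + s *\<^sub>R v) + f p
     - s^2 * (u \<bullet> (hessf p *v v))\<bar>
    \<le> (norm u * L / 2 * norm v ^ 2 + L * norm u ^ 2 * norm v) * s ^ 3"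
proof -
  define C where "C = norm u * L / 2 * norm v ^ 2 + L * norm u ^ 2 * norm v"
  define a where "a = s * (u \<bullet> (hessf p *v v))"
  have hd: "((\<lambda>t. f ((p + s *\<^sub>R v) + t *\<^sub>R u) - f (p + t *\<^sub>R u) - t * a) has_real_derivative
     (gradf ((p + s *\<^sub>R v) + t *\<^sub>R u) \<bullet> u - gradf (p + t *\<^sub>R u) \<bullet> u - a)) (at t)" for t
    by (auto intro!: derivative_eq_intros line_f[OF grad hess])
  have Kd: "((\<lambda>t. C * s^2 * t) has_real_derivative (C * s^2)) (at t)" for t
    by (auto intro!: derivative_eq_intros)
  have bd: "\<bar>gradf ((p + s *\<^sub>R v) + t *\<^sub>R u) \<bullet> u - gradf (p + t *\<^sub>R u) \<bullet> u - a\<bar> \<le> C * s^2"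
    if t: "0 \<le> t" "t \<le> s" for t
  proof -
    define r where "r = p + t *\<^sub>R u"
    have eq: "(p + s *\<^sub>R v) + t *\<^sub>R u = r + s *\<^sub>R v" by (simp add: r_def algebra_simps)
    have "gradf ((p + s *\<^sub>R v) + t *\<^sub>R u) \<bullet> u - gradf (p + t *\<^sub>R u) \<bullet> u - a
      = u \<bullet> (gradf (r + s *\<^sub>R v) - gradf r - hessf r *v (s *\<^sub>R v))
        + s * (u \<bullet> ((hessf r - hessf p) *v v))"
      unfolding eq by (simp add: a_def r_def[symmetric] matrix_vector_mult_scaleR inner_diff_right
          inner_commute matrix_vector_mult_diff_rdistrib algebra_simps)
    also have "\<bar>\<dots>\<bar> \<le> norm u * (L / 2 * norm (s *\<^sub>R v) ^ 2) + s * (norm u * (L * norm (r - p) * norm v))"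
    proof (rule order_trans[OF abs_triangle_ineq add_mono])
      show "\<bar>u \<bullet> (gradf (r + s *\<^sub>R v) - gradf r - hessf r *v (s *\<^sub>R v))\<bar> \<le> norm u * (L / 2 * norm (s *\<^sub>R v) ^ 2)"
        by (rule order_trans[OF Cauchy_Schwarz_ineq2 mult_left_mono[OF T1]]) simp
      have "\<bar>u \<bullet> ((hessf r - hessf p) *v v)\<bar> \<le> norm u * norm ((hessf r - hessf p) *v v)"
        by (rule Cauchy_Schwarz_ineq2)
      also have "\<dots> \<le> norm u * (opnorm (hessf r - hessf p) * norm v)"
        by (rule mult_left_mono[OF opn]) simp
      also have "\<dots> \<le> norm u * (L * norm (r - p) * norm v)"
        by (intro mult_left_mono mult_right_mono hess_lip) auto
      finally show "\<bar>s * (u \<bullet> ((hessf r - hessf p) *v v))\<bar> \<le> s * (norm u * (L * norm (r - p) * norm v))"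
        using s by (simp add: abs_mult mult_left_mono)
    qed
    also have "\<dots> \<le> norm u * (L / 2 * (s * norm v) ^ 2) + s * (norm u * (L * (s * norm u) * norm v))"
      using t s L_nonneg by (intro add_mono mult_left_mono mult_right_mono) (auto simp: r_def mult_right_mono)
    also have "\<dots> = C * s^2" by (simp add: C_def power2_eq_square algebra_simps)
    finally show ?thesis .
  qed
  have "\<bar>(f ((p + s *\<^sub>R v) + s *\<^sub>R u) - f (p + s *\<^sub>R u) - s * a) - (f ((p + s *\<^sub>R v) + 0 *\<^sub>R u) - f (p + 0 *\<^sub>R u) - 0 * a)\<bar>
     \<le> C * s^2 * s - C * s^2 * 0"
    by (rule mvt_cmp[OF s hd Kd bd]) auto
  then show ?thesis by (simp add: a_def C_def power2_eq_square power3_eq_cube algebra_simps)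
qed

lemma hsym_inner: "u \<bullet> (hessf p *v v) = v \<bullet> (hessf p *v u)"
proof -
  define C1 where "C1 = norm u * L / 2 * norm v ^ 2 + L * norm u ^ 2 * norm v"
  define C2 where "C2 = norm v * L / 2 * norm u ^ 2 + L * norm v ^ 2 * norm u"
  define \<delta> where "\<delta> = \<bar>u \<bullet> (hessf p *v v) - v \<bullet> (hessf p *v u)\<bar>"
  have C: "C1 + C2 \<ge> 0" using L_nonneg by (simp add: C1_def C2_def)
  have b: "\<delta> \<le> (C1 + C2) * s" if s: "s > 0" for s
  proof -
    have A: "\<bar>f (p + s *\<^sub>R v + s *\<^sub>R u) - f (p + s *\<^sub>R u) - f (p + s *\<^sub>R v) + f p
     - s^2 * (u \<bullet> (hessf p *v v))\<bar> \<le> C1 * s^3"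
      using sym_aux[of s p v u] s by (simp add: C1_def)
    have B: "\<bar>f (p + s *\<^sub>R u + s *\<^sub>R v) - f (p + s *\<^sub>R v) - f (p + s *\<^sub>R u) + f p
     - s^2 * (v \<bullet> (hessf p *v u))\<bar> \<le> C2 * s^3"
      using sym_aux[of s p u v] s by (simp add: C2_def)
    have eq: "p + s *\<^sub>R u + s *\<^sub>R v = p + s *\<^sub>R v + s *\<^sub>R u" by (simp add: algebra_simps)
    have e2: "s^2 * \<delta> = \<bar>s^2 * (u \<bullet> (hessf p *v v)) - s^2 * (v \<bullet> (hessf p *v u))\<bar>"
      by (simp add: \<delta>_def abs_mult right_diff_distrib[symmetric])
    have "s^2 * \<delta> \<le> C1 * s^3 + C2 * s^3"
      using A B unfolding eq e2 by (simp only: abs_le_iff) linarith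
    then have "s^2 * \<delta> \<le> s^2 * ((C1 + C2) * s)" by (simp add: power2_eq_square power3_eq_cube algebra_simps)
    then show ?thesis using s by simp
  qed
  have "\<delta> \<le> 0"
  proof (rule ccontr)
    assume "\<not> \<delta> \<le> 0"
    then have d: "\<delta> > 0" by simp
    have "\<delta> \<le> (C1 + C2) * (\<delta> / (C1 + C2 + 1))" using b[of "\<delta> / (C1 + C2 + 1)"] d C by simp
    also have "\<dots> < \<delta>" using d C by (simp add: field_simps)
    finally show False by simp
  qed
  then show ?thesis by (simp add: \<delta>_def)
qed

lemma hsym: "transpose (hessf p) = hessf p"
proof -
  have "hessf p $ i $ j = axis i 1 \<bullet> (hessf p *v axis j 1)" for i j
    by (simp add: matrix_vector_mult_basis inner_axis' column_def)
  then show ?thesis using hsym_inner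
    by (simp add: vec_eq_iff transpose_def)
qed

end

definition qspan :: "real^'n::finite \<Rightarrow> real \<Rightarrow> (real^'n \<Rightarrow> real) \<Rightarrow> bool" where
  "qspan x \<Delta> F \<longleftrightarrow> (\<exists>\<theta>. \<forall>w. F w = (\<Sum>b\<in>qbasis. \<theta> b * phi ((1 / \<Delta>) *\<^sub>R (w - x)) b))"

lemma finite_qbasis: "finite (qbasis :: 'n::finite qidx set)"
proof -
  have "{QQ {i, j} | i j. True} = (\<lambda>(i::'n, j). QQ {i, j}) ` UNIV" by auto
  then show ?thesis unfolding qbasis_def by simp
qed

lemma qspan_add: "qspan x \<Delta> F \<Longrightarrow> qspan x \<Delta> G \<Longrightarrow> qspan x \<Delta> (\<lambda>w. F w + G w)"
  unfolding qspan_def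
proof (elim exE)
  fix \<theta>1 \<theta>2
  assume 1: "\<forall>w. F w = (\<Sum>b\<in>qbasis. \<theta>1 b * phi ((1 / \<Delta>) *\<^sub>R (w - x)) b)"
    and 2: "\<forall>w. G w = (\<Sum>b\<in>qbasis. \<theta>2 b * phi ((1 / \<Delta>) *\<^sub>R (w - x)) b)"
  show "\<exists>\<theta>. \<forall>w. F w + G w = (\<Sum>b\<in>qbasis. \<theta> b * phi ((1 / \<Delta>) *\<^sub>R (w - x)) b)"
    by (rule exI[of _ "\<lambda>b. \<theta>1 b + \<theta>2 b"]) (simp add: 1 2 sum.distrib distrib_right)
qed

lemma qspan_scale: "qspan x \<Delta> F \<Longrightarrow> qspan x \<Delta> (\<lambda>w. a * F w)"
  unfolding qspan_def
proof (elim exE)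
  fix \<theta>1
  assume 1: "\<forall>w. F w = (\<Sum>b\<in>qbasis. \<theta>1 b * phi ((1 / \<Delta>) *\<^sub>R (w - x)) b)"
  show "\<exists>\<theta>. \<forall>w. a * F w = (\<Sum>b\<in>qbasis. \<theta> b * phi ((1 / \<Delta>) *\<^sub>R (w - x)) b)"
    by (rule exI[of _ "\<lambda>b. a * \<theta>1 b"]) (simp add: 1 sum_distrib_left mult.assoc)
qed

lemma qspan_zero: "qspan x \<Delta> (\<lambda>w. 0)"
  unfolding qspan_def by (rule exI[of _ "\<lambda>b. 0"]) simp

lemma qspan_sum: "finite I \<Longrightarrow> (\<And>i. i \<in> I \<Longrightarrow> qspan x \<Delta> (F i)) \<Longrightarrow> qspan x \<Delta> (\<lambda>w. \<Sum>i\<in>I. F i w)"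
proof (induction I rule: finite_induct)
  case empty then show ?case by (simp add: qspan_zero)
next
  case (insert a I)
  then show ?case by (simp add: qspan_add)
qed

lemma qspan_family:
  assumes "finite I" "\<beta> ` I \<subseteq> qbasis"
  shows "qspan x \<Delta> (\<lambda>w. \<Sum>s\<in>I. a s * phi ((1 / \<Delta>) *\<^sub>R (w - x)) (\<beta> s))"
  unfolding qspan_def
proof (rule exI[of _ "\<lambda>b. \<Sum>s\<in>{s \<in> I. \<beta> s = b}. a s"], rule allI)
  fix w
  let ?u = "(1 / \<Delta>) *\<^sub>R (w - x)"
  have "(\<Sum>b\<in>qbasis. (\<Sum>s\<in>{s \<in> I. \<beta> s = b}. a s) * phi ?u b)
     = (\<Sum>b\<in>qbasis. (\<Sum>s\<in>{s \<in> I. \<beta> s = b}. a s * phi ?u (\<beta> s)))"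
    by (simp add: sum_distrib_right)
  also have "\<dots> = (\<Sum>s\<in>I. a s * phi ?u (\<beta> s))"
    by (rule sum.group[OF assms(1) finite_qbasis assms(2)])
  finally show "(\<Sum>s\<in>I. a s * phi ?u (\<beta> s)) = (\<Sum>b\<in>qbasis. (\<Sum>s\<in>{s \<in> I. \<beta> s = b}. a s) * phi ?u b)"
    by simp
qed

lemma phi_QQ: "(if i = j then 2 else 1) * phi u (QQ {i, j}) = u $ i * u $ j"
  by (cases "i = j") (auto simp: power2_eq_square)

lemma qspan_quad:
  assumes D: "\<Delta> \<noteq> 0"
  shows "qspan x \<Delta> (quad c g H x)"
proof -
  define u where "u = (\<lambda>w. (1 / \<Delta>) *\<^sub>R (w - x))"
  have wx: "w - x = \<Delta> *\<^sub>R u w" for w using D by (simp add: u_def)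
  define G where "G = (\<lambda>w. (\<Sum>s\<in>(UNIV::unit set). c * phi (u w) QC)
    + (\<Sum>i\<in>UNIV. (\<Delta> * g $ i) * phi (u w) (QL i))
    + (\<Sum>s\<in>UNIV. (\<Delta>^2 / 2 * H $ fst s $ snd s * (if fst s = snd s then 2 else 1)) * phi (u w) (QQ {fst s, snd s})))"
  have eq: "quad c g H x w = (\<Sum>s\<in>(UNIV::unit set). c * phi (u w) QC)
    + (\<Sum>i\<in>UNIV. (\<Delta> * g $ i) * phi (u w) (QL i))
    + (\<Sum>s\<in>UNIV. (\<Delta>^2 / 2 * H $ fst s $ snd s * (if fst s = snd s then 2 else 1)) * phi (u w) (QQ {fst s, snd s}))" for w
  proof -
    have 1: "g \<bullet> (w - x) = (\<Sum>i\<in>UNIV. (\<Delta> * g $ i) * phi (u w) (QL i))"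
      unfolding wx by (simp add: inner_vec_def sum_distrib_left algebra_simps)
    have "(\<Sum>s\<in>UNIV. (\<Delta>^2 / 2 * H $ fst s $ snd s * (if fst s = snd s then 2 else 1)) * phi (u w) (QQ {fst s, snd s}))
       = (\<Sum>s\<in>UNIV. \<Delta>^2 / 2 * H $ fst s $ snd s * (u w $ fst s * u w $ snd s))"
      by (rule sum.cong[OF refl]) (simp only: mult.assoc phi_QQ)
    also have "\<dots> = (\<Sum>i\<in>UNIV. \<Sum>j\<in>UNIV. \<Delta>^2 / 2 * H $ i $ j * (u w $ i * u w $ j))"
      unfolding sum.cartesian_product by (simp add: split_def)
    also have "\<dots> = 1/2 * ((w - x) \<bullet> (H *v (w - x)))"
      unfolding wx by (simp add: inner_vec_def matrix_vector_mult_def sum_distrib_left power2_eq_square algebra_simps)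
    finally have 2: "1/2 * ((w - x) \<bullet> (H *v (w - x))) = (\<Sum>s\<in>UNIV. (\<Delta>^2 / 2 * H $ fst s $ snd s * (if fst s = snd s then 2 else 1)) * phi (u w) (QQ {fst s, snd s}))"
      by simp
    show ?thesis unfolding quad_def 1 2 by simp
  qed
  have "qspan x \<Delta> (\<lambda>w. (\<Sum>s\<in>(UNIV::unit set). c * phi (u w) QC)
    + (\<Sum>i\<in>UNIV. (\<Delta> * g $ i) * phi (u w) (QL i))
    + (\<Sum>s\<in>UNIV. (\<Delta>^2 / 2 * H $ fst s $ snd s * (if fst s = snd s then 2 else 1)) * phi (u w) (QQ {fst s, snd s})))"
    unfolding u_def
    by (intro qspan_add qspan_family) (auto simp: qbasis_def)
  moreover have "quad c g H x = G" by (rule ext) (simp only: eq G_def)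
  ultimately show ?thesis by (simp add: G_def)
qed

lemma qspan_unique:
  assumes Q: "qmat_invertible (Qhat x \<Delta> y)" and F: "qspan x \<Delta> F" and z: "\<And>k. F (y k) = 0"
  shows "F w = 0"
proof -
  obtain \<theta> where th: "\<And>w. F w = (\<Sum>b\<in>qbasis. \<theta> b * phi ((1 / \<Delta>) *\<^sub>R (w - x)) b)"
    using F unfolding qspan_def by blast
  obtain R where R: "\<And>b b'. b \<in> qbasis \<Longrightarrow> b' \<in> qbasis \<Longrightarrow> (\<Sum>k\<in>UNIV. R b k * Qhat x \<Delta> y k b') = (if b = b' then 1 else 0)"
    using Q unfolding qmat_invertible_def by blast
  have "\<theta> b = 0" if b: "b \<in> qbasis" for b
  proof -
    have "(\<Sum>b'\<in>qbasis. (if b = b' then 1 else 0) * \<theta> b') = (\<Sum>b'\<in>qbasis. if b = b' then \<theta> b' else 0)"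
      by (rule sum.cong) auto
    then have "\<theta> b = (\<Sum>b'\<in>qbasis. (if b = b' then 1 else 0) * \<theta> b')"
      using b by (simp add: sum.delta'[OF finite_qbasis])
    also have "\<dots> = (\<Sum>b'\<in>qbasis. (\<Sum>k\<in>UNIV. R b k * Qhat x \<Delta> y k b') * \<theta> b')"
      using R b by (intro sum.cong) auto
    also have "\<dots> = (\<Sum>k\<in>UNIV. R b k * (\<Sum>b'\<in>qbasis. \<theta> b' * Qhat x \<Delta> y k b'))"
      by (simp add: sum_distrib_right sum_distrib_left sum.swap[of _ qbasis] algebra_simps)
    also have "\<dots> = (\<Sum>k\<in>UNIV. R b k * F (y k))"
      by (simp add: th Qhat_def)
    finally show ?thesis by (simp add: z)
  qed
  then show ?thesis by (simp add: th)
qed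


lemma quad_diff: "quad c g H x w - quad c' g' H' x w = quad (c - c') (g - g') (H - H') x w"
  unfolding quad_def by (simp add: inner_diff_left matrix_vector_mult_diff_rdistrib inner_diff_right right_diff_distrib)

lemma quad_line: "quad a b A x (x + t *\<^sub>R v) = a + t * (b \<bullet> v) + t^2 / 2 * (v \<bullet> (A *v v))"
  by (simp add: quad_def matrix_vector_mult_scaleR power2_eq_square)

lemma sym_inner: fixes A :: "real^'n^'n" shows "transpose A = A \<Longrightarrow> w \<bullet> (A *v u) = u \<bullet> (A *v w)"
proof -
  assume S: "transpose A = A"
  have "w \<bullet> (A *v u) = (w v* A) \<bullet> u" by (rule dot_lmul_matrix[symmetric])
  also have "\<dots> = (transpose A *v w) \<bullet> u" by (simp only: transpose_matrix_vector)
  also have "\<dots> = u \<bullet> (A *v w)" by (simp only: S inner_commute)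
  finally show ?thesis .
qed

lemma sym_bound:
  fixes A :: "real^'n^'n"
  assumes S: "transpose A = A" and B: "\<And>v. norm v = 1 \<Longrightarrow> \<bar>v \<bullet> (A *v v)\<bar> \<le> M"
  shows "opnorm A \<le> M"
proof -
  obtain i :: 'n where True by simp
  have M: "M \<ge> 0" using B[of "axis i 1"] using abs_ge_zero order_trans by fastforce
  have B2: "\<bar>v \<bullet> (A *v v)\<bar> \<le> M * norm v ^ 2" for v
  proof (cases "v = 0")
    case True then show ?thesis by simp
  next
    case False
    have "\<bar>((1 / norm v) *\<^sub>R v) \<bullet> (A *v ((1 / norm v) *\<^sub>R v))\<bar> \<le> M"
      using False by (intro B) simp
    then have "\<bar>v \<bullet> (A *v v)\<bar> / norm v ^ 2 \<le> M"
      by (simp add: matrix_vector_mult_scaleR abs_mult power2_eq_square)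
    then show ?thesis using False by (simp add: field_simps)
  qed
  have P: "4 * (u \<bullet> (A *v w)) \<le> 2 * M * (norm u ^ 2 + norm w ^ 2)" for u w
  proof -
    have "(u + w) \<bullet> (A *v (u + w)) - (u - w) \<bullet> (A *v (u - w)) = 2 * (u \<bullet> (A *v w)) + 2 * (w \<bullet> (A *v u))"
      by (simp add: matrix_vector_right_distrib matrix_vector_mult_diff_distrib inner_add_left inner_add_right
          inner_diff_left inner_diff_right)
    also have "\<dots> = 4 * (u \<bullet> (A *v w))" using sym_inner[OF S, of w u] by simp
    finally have e: "4 * (u \<bullet> (A *v w)) = (u + w) \<bullet> (A *v (u + w)) - (u - w) \<bullet> (A *v (u - w))" by simp
    have "(u + w) \<bullet> (A *v (u + w)) - (u - w) \<bullet> (A *v (u - w)) \<le> M * norm (u + w) ^ 2 + M * norm (u - w) ^ 2"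
      using B2[of "u + w"] B2[of "u - w"] by (simp add: abs_le_iff)
    also have "\<dots> = 2 * M * (norm u ^ 2 + norm w ^ 2)"
      by (simp add: power2_norm_eq_inner inner_add_left inner_add_right inner_diff_left inner_diff_right
          inner_commute algebra_simps)
    finally show ?thesis using e by simp
  qed
  show ?thesis
  proof (rule opnorm_le)
    fix v :: "real^'n"
    show "norm (A *v v) \<le> M * norm v"
    proof (cases "A *v v = 0")
      case True then show ?thesis using M by simp
    next
      case False
      then have nv: "norm (A *v v) > 0" by simp
      define t where "t = norm v / norm (A *v v)"
      have t0: "t \<ge> 0" by (simp add: t_def)
      have tn: "t * norm (A *v v) = norm v" using nv by (simp add: t_def)
      have "4 * ((t *\<^sub>R (A *v v)) \<bullet> (A *v v)) \<le> 2 * M * (norm (t *\<^sub>R (A *v v)) ^ 2 + norm v ^ 2)"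
        by (rule P)
      then have "4 * (t * norm (A *v v) ^ 2) \<le> 2 * M * ((t * norm (A *v v)) ^ 2 + norm v ^ 2)"
        using t0 by (simp add: power2_norm_eq_inner power_mult_distrib)
      moreover have "t * norm (A *v v) ^ 2 = norm v * norm (A *v v)"
        using tn by (metis power2_eq_square mult.assoc)
      ultimately have "4 * (norm v * norm (A *v v)) \<le> 4 * M * norm v ^ 2"
        using tn by simp
      then have "norm v * norm (A *v v) \<le> norm v * (M * norm v)"
        by (simp add: power2_eq_square algebra_simps)
      moreover have "norm v > 0" using False by (metis matrix_vector_mult_0_right zero_less_norm_iff)
      ultimately show ?thesis by simp
    qed
  qed
qed

theorem theorem6p5:
  fixes f :: "real^'n \<Rightarrow> real"
    and gradf :: "real^'n \<Rightarrow> real^'n"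
    and hessf :: "real^'n \<Rightarrow> real^'n^'n"
    and L \<beta> \<Delta> \<Lambda>\<^sub>1 :: real
    and x :: "real^'n"
    and y :: "'p::finite \<Rightarrow> real^'n"
    and c :: real and g :: "real^'n" and H :: "real^'n^'n"
    and lc :: "'p \<Rightarrow> real" and lg :: "'p \<Rightarrow> real^'n" and lH :: "'p \<Rightarrow> real^'n^'n"
  assumes bdd_below: "\<exists>b. \<forall>z. b \<le> f z"
    and grad: "\<And>z. (f has_derivative (\<lambda>h. gradf z \<bullet> h)) (at z)"
    and hess: "\<And>z. (gradf has_derivative (\<lambda>h. hessf z *v h)) (at z)"
    and hess_cont: "continuous_on UNIV hessf"
    and hess_lip: "\<And>u v. opnorm (hessf u - hessf v) \<le> L * norm (u - v)"
    and Delta_pos: "\<Delta> > 0"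
    and p_card: "CARD('p) = (CARD('n) + 1) * (CARD('n) + 2) div 2"
    and beta_pos: "\<beta> > 0"
    and y_near: "\<And>k. norm (y k - x) \<le> \<beta> * \<Delta>"
    and Q_inv: "qmat_invertible (Qhat x \<Delta> y)"
    and m_sym: "transpose H = H"
    and m_interp: "\<And>k. quad c g H x (y k) = f (y k)"
    and l_sym: "\<And>i. transpose (lH i) = lH i"
    and l_lagr: "\<And>i j. quad (lc i) (lg i) (lH i) x (y j) = (if i = j then 1 else 0)"
    and Lambda: "\<And>z. z \<in> cball x \<Delta> \<Longrightarrow> (\<Sum>i\<in>UNIV. \<bar>quad (lc i) (lg i) (lH i) x z\<bar>) \<le> \<Lambda>\<^sub>1"
  shows "\<forall>z\<in>cball x \<Delta>.
      \<bar>quad c g H x z - f z\<bar> \<le> (L * \<beta>^3 * \<Lambda>\<^sub>1 / 6 + L / 6) * \<Delta>^3 \<and>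
      norm ((g + H *v (z - x)) - gradf z) \<le> (17/3 * L * \<beta>^3 * \<Lambda>\<^sub>1 + L / 2) * \<Delta>^2 \<and>
      opnorm (H - hessf z) \<le> (4 * L * \<beta>^3 * \<Lambda>\<^sub>1 + L) * \<Delta>"
proof -
  have L0: "L \<ge> 0" by (rule L_nonneg[OF grad hess hess_lip])
  have HS: "transpose (hessf x) = hessf x" by (rule hsym[OF grad hess hess_lip])
  have xin: "x \<in> cball x \<Delta>" using Delta_pos by simp
  have Lam0: "\<Lambda>\<^sub>1 \<ge> 0"
    using Lambda[OF xin] by (meson order_trans sum_nonneg abs_ge_zero)
  define K where "K = L * \<beta>^3 * \<Lambda>\<^sub>1"
  have K0: "K \<ge> 0" using L0 Lam0 beta_pos by (simp add: K_def)
  define q where "q = (\<lambda>w. quad (c - f x) (g - gradf x) (H - hessf x) x w)"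
  have q_eq: "q w = quad c g H x w - quad (f x) (gradf x) (hessf x) x w" for w
    by (simp add: q_def quad_diff)
  define lp where "lp = (\<lambda>i w. quad (lc i) (lg i) (lH i) x w)"
  have lagr: "q w = (\<Sum>i\<in>UNIV. q (y i) * lp i w)" for w
  proof -
    define G where "G = (\<lambda>w. q w + (-1) * (\<Sum>i\<in>UNIV. q (y i) * lp i w))"
    have "qspan x \<Delta> G" unfolding G_def q_def lp_def using Delta_pos
      by (intro qspan_add qspan_scale qspan_sum qspan_quad) auto
    moreover have "G (y k) = 0" for k
    proof -
      have "(\<Sum>i\<in>UNIV. q (y i) * lp i (y k)) = (\<Sum>i\<in>UNIV. if i = k then q (y i) else 0)"
        by (rule sum.cong) (auto simp: lp_def l_lagr)
      also have "\<dots> = q (y k)" by simp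
      finally show ?thesis by (simp add: G_def)
    qed
    ultimately have "G w = 0" by (rule qspan_unique[OF Q_inv])
    then show ?thesis by (simp add: G_def)
  qed
  have qy: "\<bar>q (y k)\<bar> \<le> L / 6 * (\<beta> * \<Delta>) ^ 3" for k
  proof -
    have "q (y k) = f (y k) - quad (f x) (gradf x) (hessf x) x (y k)" by (simp add: q_eq m_interp)
    also have "\<dots> = f (x + (y k - x)) - f x - gradf x \<bullet> (y k - x) - 1/2 * ((y k - x) \<bullet> (hessf x *v (y k - x)))"
      by (simp add: quad_def)
    finally have "\<bar>q (y k)\<bar> \<le> L / 6 * norm (y k - x) ^ 3"
      using T0[OF grad hess hess_lip, of x "y k - x"] by simp
    also have "\<dots> \<le> L / 6 * (\<beta> * \<Delta>) ^ 3"
      using L0 y_near[of k] by (intro mult_left_mono power_mono) auto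
    finally show ?thesis .
  qed
  have qb: "\<bar>q z\<bar> \<le> K * \<Delta>^3 / 6" if z: "z \<in> cball x \<Delta>" for z
  proof -
    have "\<bar>q z\<bar> \<le> (\<Sum>i\<in>UNIV. \<bar>q (y i) * lp i z\<bar>)" unfolding lagr[of z] by (rule sum_abs)
    also have "\<dots> \<le> (\<Sum>i\<in>UNIV. L / 6 * (\<beta> * \<Delta>) ^ 3 * \<bar>lp i z\<bar>)"
      unfolding abs_mult by (intro sum_mono mult_right_mono qy abs_ge_zero)
    also have "\<dots> = L / 6 * (\<beta> * \<Delta>) ^ 3 * (\<Sum>i\<in>UNIV. \<bar>lp i z\<bar>)" by (simp add: sum_distrib_left)
    also have "\<dots> \<le> L / 6 * (\<beta> * \<Delta>) ^ 3 * \<Lambda>\<^sub>1"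
      using Lambda[OF z] L0 beta_pos Delta_pos by (intro mult_left_mono) (auto simp: lp_def)
    also have "\<dots> = K * \<Delta>^3 / 6" by (simp add: K_def power_mult_distrib)
    finally show ?thesis .
  qed
  define A where "A = H - hessf x"
  define b where "b = g - gradf x"
  have qline: "q (x + t *\<^sub>R v) = (c - f x) + t * (b \<bullet> v) + t^2/2 * (v \<bullet> (A *v v))" for t v
    by (simp add: q_def quad_line A_def b_def)
  have AS: "transpose A = A"
  proof -
    have "transpose A = transpose H - transpose (hessf x)" by (simp add: A_def transpose_def vec_eq_iff)
    then show ?thesis by (simp add: m_sym HS A_def)
  qed
  have inb: "x + t *\<^sub>R v \<in> cball x \<Delta>" if "norm v = 1" "\<bar>t\<bar> \<le> \<Delta>" for t v
    using that by (simp add: dist_norm)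
  have Ab: "opnorm A \<le> 2/3 * K * \<Delta>"
  proof (rule sym_bound[OF AS])
    fix v :: "real^'n" assume v: "norm v = 1"
    have "q (x + \<Delta> *\<^sub>R v) + q (x + (-\<Delta>) *\<^sub>R v) - 2 * q (x + 0 *\<^sub>R v) = \<Delta>^2 * (v \<bullet> (A *v v))"
      unfolding qline by (simp add: power2_eq_square algebra_simps)
    moreover have "\<bar>q (x + \<Delta> *\<^sub>R v) + q (x + (-\<Delta>) *\<^sub>R v) - 2 * q (x + 0 *\<^sub>R v)\<bar> \<le> 4 * (K * \<Delta>^3 / 6)"
      using qb[OF inb[OF v, of \<Delta>]] qb[OF inb[OF v, of "-\<Delta>"]] qb[OF inb[OF v, of 0]] Delta_pos
      by (simp only: abs_le_iff) auto
    ultimately have "\<Delta>^2 * \<bar>v \<bullet> (A *v v)\<bar> \<le> \<Delta>^2 * (2/3 * K * \<Delta>)"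
      by (simp add: abs_mult power3_eq_cube power2_eq_square algebra_simps)
    then show "\<bar>v \<bullet> (A *v v)\<bar> \<le> 2/3 * K * \<Delta>" using Delta_pos by simp
  qed
  have bb: "norm b \<le> K * \<Delta>^2 / 6"
  proof (cases "b = 0")
    case True then show ?thesis using K0 by simp
  next
    case False
    define v where "v = (1 / norm b) *\<^sub>R b"
    have v: "norm v = 1" using False by (simp add: v_def)
    have bv: "b \<bullet> v = norm b" using False by (simp add: v_def power2_norm_eq_inner[symmetric] power2_eq_square)
    have "q (x + \<Delta> *\<^sub>R v) - q (x + (-\<Delta>) *\<^sub>R v) = 2 * \<Delta> * norm b"
      unfolding qline bv by (simp add: power2_eq_square algebra_simps)
    moreover have "\<bar>q (x + \<Delta> *\<^sub>R v) - q (x + (-\<Delta>) *\<^sub>R v)\<bar> \<le> 2 * (K * \<Delta>^3 / 6)"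
      using qb[OF inb[OF v, of \<Delta>]] qb[OF inb[OF v, of "-\<Delta>"]] Delta_pos
      by (simp only: abs_le_iff) auto
    ultimately have "\<Delta> * norm b \<le> \<Delta> * (K * \<Delta>^2 / 6)"
      using Delta_pos by (simp add: power3_eq_cube power2_eq_square algebra_simps)
    then show ?thesis using Delta_pos by simp
  qed
  show ?thesis
  proof (intro ballI conjI)
    fix z assume z: "z \<in> cball x \<Delta>"
    have r: "norm (z - x) \<le> \<Delta>" using z by (simp add: dist_norm norm_minus_commute)
    have zx: "x + (z - x) = z" by simp
    have T0z: "\<bar>f z - quad (f x) (gradf x) (hessf x) x z\<bar> \<le> L / 6 * \<Delta>^3"
    proof -
      have "\<bar>f z - quad (f x) (gradf x) (hessf x) x z\<bar> \<le> L / 6 * norm (z - x) ^ 3"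
        using T0[OF grad hess hess_lip, of x "z - x"] by (simp add: quad_def algebra_simps)
      also have "\<dots> \<le> L / 6 * \<Delta>^3" using L0 r by (intro mult_left_mono power_mono) auto
      finally show ?thesis .
    qed
    have "quad c g H x z - f z = q z - (f z - quad (f x) (gradf x) (hessf x) x z)" by (simp add: q_eq)
    then have "\<bar>quad c g H x z - f z\<bar> \<le> K * \<Delta>^3 / 6 + L / 6 * \<Delta>^3"
      using qb[OF z] T0z by linarith
    then show "\<bar>quad c g H x z - f z\<bar> \<le> (L * \<beta>^3 * \<Lambda>\<^sub>1 / 6 + L / 6) * \<Delta>^3"
      by (simp add: K_def algebra_simps)
  next
    fix z assume z: "z \<in> cball x \<Delta>"
    have r: "norm (z - x) \<le> \<Delta>" using z by (simp add: dist_norm norm_minus_commute)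
    have e: "(g + H *v (z - x)) - gradf z = (b + A *v (z - x)) - (gradf (x + (z - x)) - gradf x - hessf x *v (z - x))"
      by (simp add: A_def b_def matrix_vector_mult_diff_rdistrib)
    have n1: "norm (A *v (z - x)) \<le> 2/3 * K * \<Delta> * \<Delta>"
      using order_trans[OF opn mult_mono[OF Ab r]] K0 Delta_pos by simp
    have n2: "norm (gradf (x + (z - x)) - gradf x - hessf x *v (z - x)) \<le> L / 2 * \<Delta>^2"
    proof -
      have "norm (gradf (x + (z - x)) - gradf x - hessf x *v (z - x)) \<le> L / 2 * norm (z - x) ^ 2"
        by (rule T1[OF grad hess hess_lip])
      also have "\<dots> \<le> L / 2 * \<Delta>^2" using L0 r by (intro mult_left_mono power_mono) auto
      finally show ?thesis .
    qed
    have "norm ((g + H *v (z - x)) - gradf z) \<le> norm b + norm (A *v (z - x)) + norm (gradf (x + (z - x)) - gradf x - hessf x *v (z - x))"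
      unfolding e using norm_triangle_ineq4[of "b + A *v (z - x)" "gradf (x + (z - x)) - gradf x - hessf x *v (z - x)"] norm_triangle_ineq[of b "A *v (z - x)"]
      by linarith
    also have "\<dots> \<le> K * \<Delta>^2 / 6 + 2/3 * K * \<Delta> * \<Delta> + L / 2 * \<Delta>^2"
      using bb n1 n2 by linarith
    also have "\<dots> \<le> (17/3 * L * \<beta>^3 * \<Lambda>\<^sub>1 + L / 2) * \<Delta>^2"
    proof -
      have KD: "0 \<le> K * \<Delta>^2" using K0 by simp
      have a: "K * \<Delta>^2 / 6 + 2/3 * K * \<Delta> * \<Delta> + L / 2 * \<Delta>^2 = 5/6 * (K * \<Delta>^2) + L / 2 * \<Delta>^2"
        by (simp add: power2_eq_square algebra_simps)
      have b: "(17/3 * L * \<beta>^3 * \<Lambda>\<^sub>1 + L / 2) * \<Delta>^2 = 17/3 * (K * \<Delta>^2) + L / 2 * \<Delta>^2"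
        by (simp add: K_def algebra_simps)
      show ?thesis unfolding a b using KD by linarith
    qed
    finally show "norm ((g + H *v (z - x)) - gradf z) \<le> (17/3 * L * \<beta>^3 * \<Lambda>\<^sub>1 + L / 2) * \<Delta>^2" .
  next
    fix z assume z: "z \<in> cball x \<Delta>"
    have r: "norm (x - z) \<le> \<Delta>" using z by (simp add: dist_norm)
    show "opnorm (H - hessf z) \<le> (4 * L * \<beta>^3 * \<Lambda>\<^sub>1 + L) * \<Delta>"
    proof (rule opnorm_le)
      fix v :: "real^'n"
      have e: "(H - hessf z) *v v = A *v v + (hessf x - hessf z) *v v"
        by (simp add: A_def matrix_vector_mult_diff_rdistrib)
      have "norm ((H - hessf z) *v v) \<le> norm (A *v v) + norm ((hessf x - hessf z) *v v)"
        unfolding e by (rule norm_triangle_ineq)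
      also have "\<dots> \<le> opnorm A * norm v + opnorm (hessf x - hessf z) * norm v"
        by (intro add_mono opn)
      also have "\<dots> \<le> (2/3 * K * \<Delta>) * norm v + (L * \<Delta>) * norm v"
        using Ab hess_lip[of x z] r L0
        by (intro add_mono mult_right_mono) (auto intro: order_trans mult_left_mono)
      also have "\<dots> = (2/3 * K * \<Delta> + L * \<Delta>) * norm v" by (simp add: algebra_simps)
      also have "\<dots> \<le> ((4 * L * \<beta>^3 * \<Lambda>\<^sub>1 + L) * \<Delta>) * norm v"
      proof (rule mult_right_mono)
        have "0 \<le> K * \<Delta>" using K0 Delta_pos by simp
        moreover have "(4 * L * \<beta>^3 * \<Lambda>\<^sub>1 + L) * \<Delta> = 4 * (K * \<Delta>) + L * \<Delta>"
          by (simp add: K_def algebra_simps)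
        ultimately show "2/3 * K * \<Delta> + L * \<Delta> \<le> (4 * L * \<beta>^3 * \<Lambda>\<^sub>1 + L) * \<Delta>" by linarith
      qed simp
      finally show "norm ((H - hessf z) *v v) \<le> ((4 * L * \<beta>^3 * \<Lambda>\<^sub>1 + L) * \<Delta>) * norm v" .
    qed
  qed
qed

end
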